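(* Let $x^0=0,x^1,x^2,\dots$ be the (random) states chosen by DRBG($N$) in the discrete setting described in the context, let $SC^t=\sum_{i=1}^t\|x^i-x^{i-1}\|$, and let $\phi^t=\frac{1}{2\theta}\big(w^t(x_1)+w^t(x_m)\big)-\frac{\|x_m-x_1\|}{2}$. Then for every time step $t$, $\mathbb{E}[SC^t]\le\phi^t$.
   Context: Discrete setting: a finite set of states $M=\{x_1,\dots,x_m\}\subset\mathbb{R}^+$ with $x_1=0$ and equal spacing $x_{k+1}-x_k=\delta$; a norm $\|\cdot\|$ on $\mathbb{R}$; $\theta\ge1$ and $N(\cdot)=\theta\|\cdot\|$; cost functions $c^t:M\to\mathbb{R}^+$ that are restrictions to $M$ of convex functions. Work function: $w^0(x)=N(x)$ and $w^t(x)=\min_{y\in M}\{w^{t-1}(y)+c^t(y)+N(x-y)\}$ for $x\in M$. Algorithm DRBG($N$): draw a single random number $r$ uniformly from $(-1,1)$; at each time step $t$ go to the state $x^t\in M$ minimizing $Y^t(x)=w^{t-1}(x)+rN(x)$. The expectation is over $r$. *)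

theory Defs
  imports "HOL-Analysis.Analysis"
begin

definition is_norm :: "(real \<Rightarrow> real) \<Rightarrow> bool" where
  "is_norm nm \<longleftrightarrow> (\<forall>x. nm x \<ge> 0) \<and> (\<forall>x. nm x = 0 \<longleftrightarrow> x = 0)
     \<and> (\<forall>a x. nm (a * x) = \<bar>a\<bar> * nm x) \<and> (\<forall>x y. nm (x + y) \<le> nm x + nm y)"

text \<open>The equally spaced state set M = {x_1,...,x_m} with x_1 = 0, x_(k+1) - x_k = delta.\<close>
definition states :: "nat \<Rightarrow> real \<Rightarrow> real set" where
  "states m \<delta> = {real k * \<delta> | k. k < m}"

fun work :: "real set \<Rightarrow> (real \<Rightarrow> real) \<Rightarrow> (nat \<Rightarrow> real \<Rightarrow> real) \<Rightarrow> nat \<Rightarrow> real \<Rightarrow> real" where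
  "work M N c 0 x = N x"
| "work M N c (Suc t) x = Min ((\<lambda>y. work M N c t y + c (Suc t) y + N (x - y)) ` M)"

definition switching_cost :: "(real \<Rightarrow> real) \<Rightarrow> (nat \<Rightarrow> real \<Rightarrow> real) \<Rightarrow> nat \<Rightarrow> real \<Rightarrow> real" where
  "switching_cost nm xs t r = (\<Sum>i\<in>{1..t}. nm (xs i r - xs (i - 1) r))"

end

theory Submission
  imports Defs
begin


lemma mono_slopes:
  fixes H :: "nat \<Rightarrow> real"
  assumes cvx: "\<forall>k. k+2 < m \<longrightarrow> H (Suc k) - H k \<le> H (Suc (Suc k)) - H (Suc k)"
  shows "k \<le> l \<Longrightarrow> Suc l < m \<Longrightarrow> H (Suc k) - H k \<le> H (Suc l) - H l"
proof (induction l rule: dec_induct)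
  case base then show ?case by simp
next
  case (step l)
  then have "H (Suc k) - H k \<le> H (Suc l) - H l" by simp
  also have "\<dots> \<le> H (Suc (Suc l)) - H (Suc l)" using cvx step by auto
  finally show ?case .
qed

lemma right_bound:
  fixes H :: "nat \<Rightarrow> real"
  assumes cvx: "\<forall>k. k+2 < m \<longrightarrow> H (Suc k) - H k \<le> H (Suc (Suc k)) - H (Suc k)"
    and "i < j" "j < m"
  shows "H j - H i \<ge> (real j - real i) * (H (Suc i) - H i)"
proof -
  have "H j - H i = (\<Sum>k=i..<j. H (Suc k) - H k)" using assms by (simp add: sum_Suc_diff')
  also have "\<dots> \<ge> (\<Sum>k=i..<j. H (Suc i) - H i)"
    by (rule sum_mono) (use mono_slopes[OF cvx] assms in auto)
  finally show ?thesis using assms by (simp add: of_nat_diff)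
qed

lemma left_bound:
  fixes H :: "nat \<Rightarrow> real"
  assumes cvx: "\<forall>k. k+2 < m \<longrightarrow> H (Suc k) - H k \<le> H (Suc (Suc k)) - H (Suc k)"
    and "i < Suc j" "Suc j < m"
  shows "H (Suc j) - H i \<le> (real (Suc j) - real i) * (H (Suc j) - H j)"
proof -
  have "H (Suc j) - H i = (\<Sum>k=i..<Suc j. H (Suc k) - H k)" using assms by (simp add: sum_Suc_diff')
  also have "\<dots> \<le> (\<Sum>k=i..<Suc j. H (Suc j) - H j)"
    by (rule sum_mono) (use mono_slopes[OF cvx] assms in auto)
  finally show ?thesis using assms by (simp add: of_nat_diff)
qed

lemma lip_bound:
  fixes H :: "nat \<Rightarrow> real"
  assumes b: "\<forall>k. Suc k < m \<longrightarrow> \<bar>H (Suc k) - H k\<bar> \<le> l"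
    and "i \<le> j" "j < m"
  shows "\<bar>H j - H i\<bar> \<le> (real j - real i) * l"
proof -
  have "H j - H i = (\<Sum>k=i..<j. H (Suc k) - H k)" using assms by (simp add: sum_Suc_diff')
  then have "\<bar>H j - H i\<bar> \<le> (\<Sum>k=i..<j. \<bar>H (Suc k) - H k\<bar>)" by (simp add: sum_abs)
  also have "\<dots> \<le> (\<Sum>k=i..<j. l)"
    by (rule sum_mono) (use b assms in auto)
  finally show ?thesis using assms by (simp add: of_nat_diff)
qed

lemma lip_bound2:
  fixes H :: "nat \<Rightarrow> real"
  assumes b: "\<forall>k. Suc k < m \<longrightarrow> \<bar>H (Suc k) - H k\<bar> \<le> l"
    and "i < m" "j < m"
  shows "\<bar>H j - H i\<bar> \<le> \<bar>real j - real i\<bar> * l"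
proof (cases "i \<le> j")
  case True then show ?thesis using lip_bound[OF b True assms(3)] by simp
next
  case False then show ?thesis using lip_bound[OF b _ assms(2), of j] by (simp add: abs_minus_commute)
qed

section \<open>Infimal convolution with l |.|\<close>

definition Wc :: "nat \<Rightarrow> (nat \<Rightarrow> real) \<Rightarrow> real \<Rightarrow> nat \<Rightarrow> real" where
  "Wc m H l i = Min ((\<lambda>j. H j + l * \<bar>real i - real j\<bar>) ` {..<m})"

lemma Wc_le: "j < m \<Longrightarrow> Wc m H l i \<le> H j + l * \<bar>real i - real j\<bar>"
  unfolding Wc_def by (rule Min_le) auto

lemma Wc_ex: "0 < m \<Longrightarrow> \<exists>j<m. Wc m H l i = H j + l * \<bar>real i - real j\<bar>"
proof -
  assume "0 < m"
  then have "Wc m H l i \<in> (\<lambda>j. H j + l * \<bar>real i - real j\<bar>) ` {..<m}"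
    unfolding Wc_def by (intro Min_in) auto
  then show ?thesis by auto
qed

lemma Wc_lip1:
  assumes "0 < m" "l \<ge> 0"
  shows "Wc m H l (Suc i) \<le> Wc m H l i + l"
proof -
  obtain j where j: "j < m" "Wc m H l i = H j + l * \<bar>real i - real j\<bar>" using Wc_ex[OF assms(1)] by blast
  have "\<bar>real (Suc i) - real j\<bar> \<le> \<bar>real i - real j\<bar> + 1" by simp
  then have "l * \<bar>real (Suc i) - real j\<bar> \<le> l * (\<bar>real i - real j\<bar> + 1)" by (rule mult_left_mono) (use assms in auto)
  then show ?thesis using Wc_le[OF j(1), of H l "Suc i"] j(2) by (simp add: algebra_simps)
qed

lemma Wc_lip2:
  assumes "0 < m" "l \<ge> 0"
  shows "Wc m H l i \<le> Wc m H l (Suc i) + l"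
proof -
  obtain j where j: "j < m" "Wc m H l (Suc i) = H j + l * \<bar>real (Suc i) - real j\<bar>" using Wc_ex[OF assms(1)] by blast
  have "\<bar>real i - real j\<bar> \<le> \<bar>real (Suc i) - real j\<bar> + 1" by simp
  then have "l * \<bar>real i - real j\<bar> \<le> l * (\<bar>real (Suc i) - real j\<bar> + 1)" by (rule mult_left_mono) (use assms in auto)
  then show ?thesis using Wc_le[OF j(1), of H l "i"] j(2) by (simp add: algebra_simps)
qed

lemma Wc_eq_H:
  fixes H :: "nat \<Rightarrow> real"
  assumes cvx: "\<forall>k. k+2 < m \<longrightarrow> H (Suc k) - H k \<le> H (Suc (Suc k)) - H (Suc k)"
    and "i < m" "l \<ge> 0"
    and r: "Suc i < m \<Longrightarrow> H (Suc i) - H i \<ge> - l"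
    and lft: "0 < i \<Longrightarrow> H i - H (i - 1) \<le> l"
  shows "Wc m H l i = H i"
proof (rule antisym)
  show "Wc m H l i \<le> H i" using Wc_le[OF assms(2), of H l i] by simp
  have m0: "0 < m" using assms(2) by simp
  obtain j where j: "j < m" "Wc m H l i = H j + l * \<bar>real i - real j\<bar>" using Wc_ex[OF m0, of H l i] by blast
  show "H i \<le> Wc m H l i"
  proof (cases "i < j")
    case True
    have "H j - H i \<ge> (real j - real i) * (H (Suc i) - H i)" by (rule right_bound[OF cvx True j(1)])
    moreover have "(real j - real i) * (H (Suc i) - H i) \<ge> (real j - real i) * (-l)"
      by (rule mult_left_mono) (use r True j in auto)
    ultimately show ?thesis using j True by (simp add: algebra_simps)
  next
    case False
    show ?thesis
    proof (cases "j = i")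
      case True then show ?thesis using j by simp
    next
      case False
      with \<open>\<not> i < j\<close> have ji: "j < i" by simp
      then obtain i' where i': "i = Suc i'" by (cases i) auto
      have "H (Suc i') - H j \<le> (real (Suc i') - real j) * (H (Suc i') - H i')"
        by (rule left_bound[OF cvx]) (use ji i' assms in auto)
      moreover have "(real (Suc i') - real j) * (H (Suc i') - H i') \<le> (real (Suc i') - real j) * l"
        by (rule mult_left_mono) (use lft i' ji in auto)
      ultimately show ?thesis using j ji i' by (simp add: algebra_simps)
    qed
  qed
qed

lemma Wc_slope:
  fixes H :: "nat \<Rightarrow> real"
  assumes cvx: "\<forall>k. k+2 < m \<longrightarrow> H (Suc k) - H k \<le> H (Suc (Suc k)) - H (Suc k)"
    and i: "Suc i < m" and l: "l \<ge> 0"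
  shows "Wc m H l (Suc i) - Wc m H l i = max (-l) (min l (H (Suc i) - H i))"
proof -
  have m0: "0 < m" using i by simp
  consider "-l \<le> H (Suc i) - H i \<and> H (Suc i) - H i \<le> l" | "H (Suc i) - H i > l" | "H (Suc i) - H i < -l"
    by linarith
  then show ?thesis
  proof cases
    case 1
    have a: "Wc m H l i = H i"
    proof (rule Wc_eq_H[OF cvx _ l])
      show "i < m" using i by simp
      show "H (Suc i) - H i \<ge> -l" using 1 by simp
      assume "0 < i"
      then obtain i' where "i = Suc i'" by (cases i) auto
      then show "H i - H (i - 1) \<le> l" using mono_slopes[OF cvx, of i' i] 1 i by simp
    qed
    have b: "Wc m H l (Suc i) = H (Suc i)"
    proof (rule Wc_eq_H[OF cvx i l])
      assume "Suc (Suc i) < m"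
      then show "H (Suc (Suc i)) - H (Suc i) \<ge> -l" using mono_slopes[OF cvx, of i "Suc i"] 1 by simp
    next
      show "H (Suc i) - H (Suc i - 1) \<le> l" using 1 by simp
    qed
    show ?thesis using a b 1 by simp
  next
    case 2
    have "Wc m H l (Suc i) \<ge> Wc m H l i + l"
    proof -
      obtain j where j: "j < m" "Wc m H l (Suc i) = H j + l * \<bar>real (Suc i) - real j\<bar>" using Wc_ex[OF m0] by blast
      show ?thesis
      proof (cases "j \<le> i")
        case True
        then have "\<bar>real (Suc i) - real j\<bar> = \<bar>real i - real j\<bar> + 1" by simp
        then show ?thesis using j Wc_le[OF j(1), of H l i] by (simp add: algebra_simps)
      next
        case False
        then have ij: "i < j" by simp
        have "H j - H i \<ge> (real j - real i) * (H (Suc i) - H i)" by (rule right_bound[OF cvx ij j(1)])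
        moreover have "(real j - real i) * (H (Suc i) - H i) \<ge> (real j - real i) * l"
          by (rule mult_left_mono) (use 2 ij in auto)
        moreover have "l * (real j - real i - 1) \<ge> 0" using l ij by simp
        moreover have "\<bar>real (Suc i) - real j\<bar> = real j - real i - 1" using ij by simp
        ultimately show ?thesis using j Wc_le[of i m H l i] i by (simp add: algebra_simps)
      qed
    qed
    then show ?thesis using Wc_lip1[OF m0 l, of H i] 2 l by simp
  next
    case 3
    have "Wc m H l i \<ge> Wc m H l (Suc i) + l"
    proof -
      obtain j where j: "j < m" "Wc m H l i = H j + l * \<bar>real i - real j\<bar>" using Wc_ex[OF m0] by blast
      show ?thesis
      proof (cases "j \<le> i")
        case False
        then have "\<bar>real i - real j\<bar> = \<bar>real (Suc i) - real j\<bar> + 1" by simp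
        then show ?thesis using j Wc_le[OF j(1), of H l "Suc i"] by (simp add: algebra_simps)
      next
        case True
        have "H (Suc i) - H j \<le> (real (Suc i) - real j) * (H (Suc i) - H i)"
          by (rule left_bound[OF cvx]) (use True i in auto)
        moreover have "(real (Suc i) - real j) * (H (Suc i) - H i) \<le> (real (Suc i) - real j) * (-l)"
          by (rule mult_left_mono) (use 3 True in auto)
        moreover have "l * (real i - real j) \<ge> 0" using l True by simp
        moreover have "\<bar>real i - real j\<bar> = real i - real j" using True by simp
        ultimately show ?thesis using j Wc_le[OF i, of H l "Suc i"] by (simp add: algebra_simps)
      qed
    qed
    then show ?thesis using Wc_lip2[OF m0 l, of H i] 3 l by simp
  qed
qed

lemma threshold_lt:
  fixes G :: "nat \<Rightarrow> real"
  assumes cvx: "\<forall>k. k+2 < m \<longrightarrow> G (Suc k) - G k \<le> G (Suc (Suc k)) - G (Suc k)"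
    and "i < m" "\<forall>j<m. G i \<le> G j" "Suc k < m" "G (Suc k) - G k < 0"
  shows "k < i"
proof (rule ccontr)
  assume "\<not> k < i"
  then have "i < Suc k" by simp
  have "G (Suc k) - G i \<le> (real (Suc k) - real i) * (G (Suc k) - G k)"
    by (rule left_bound[OF cvx \<open>i < Suc k\<close> assms(4)])
  moreover have "(real (Suc k) - real i) * (G (Suc k) - G k) < 0"
    using \<open>i < Suc k\<close> assms(5) by (simp add: mult_pos_neg)
  ultimately show False using assms(3,4) by force
qed

lemma threshold_gt:
  fixes G :: "nat \<Rightarrow> real"
  assumes cvx: "\<forall>k. k+2 < m \<longrightarrow> G (Suc k) - G k \<le> G (Suc (Suc k)) - G (Suc k)"
    and "i < m" "\<forall>j<m. G i \<le> G j" "Suc k < m" "G (Suc k) - G k > 0"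
  shows "i \<le> k"
proof (rule ccontr)
  assume "\<not> i \<le> k"
  then have "k < i" by simp
  have "G i - G k \<ge> (real i - real k) * (G (Suc k) - G k)"
    by (rule right_bound[OF cvx \<open>k < i\<close> assms(2)])
  moreover have "(real i - real k) * (G (Suc k) - G k) > 0"
    using \<open>k < i\<close> assms(5) by simp
  moreover have "G i \<le> G k" using assms(3,4) by simp
  ultimately show False by linarith
qed

lemma tv_bound:
  fixes D :: "nat \<Rightarrow> real"
  assumes m: "m \<ge> 1" and nn: "\<forall>i<m. D i \<ge> 0"
    and P: "\<forall>k j. k \<le> j \<longrightarrow> Suc j < m \<longrightarrow> D (Suc k) - D k > 0 \<longrightarrow> D (Suc j) - D j \<ge> 0"
  shows "(\<Sum>k<m-1. \<bar>D (Suc k) - D k\<bar>) \<le> D 0 + D (m-1)"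
proof -
  define Q where "Q k \<longleftrightarrow> m - 1 \<le> k \<or> D (Suc k) - D k > 0" for k
  define K where "K = (LEAST k. Q k)"
  have QK: "Q K" unfolding K_def by (rule LeastI[of _ "m-1"]) (simp add: Q_def)
  have Km: "K \<le> m - 1" unfolding K_def by (rule Least_le) (simp add: Q_def)
  have low: "D (Suc k) - D k \<le> 0" if "k < K" for k
    using not_less_Least[OF that[unfolded K_def]] by (simp add: Q_def)
  have high: "D (Suc k) - D k \<ge> 0" if "K \<le> k" "k < m - 1" for k
  proof -
    have "D (Suc K) - D K > 0" using QK that by (simp add: Q_def)
    then show ?thesis using P that by auto
  qed
  have "K < m" using Km m by linarith
  have split: "{..<m-1} = {..<K} \<union> {K..<m-1}" using Km by auto
  have "(\<Sum>k<m-1. \<bar>D (Suc k) - D k\<bar>) = (\<Sum>k<K. \<bar>D (Suc k) - D k\<bar>) + (\<Sum>k=K..<m-1. \<bar>D (Suc k) - D k\<bar>)"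
    unfolding split by (rule sum.union_disjoint) auto
  also have "(\<Sum>k<K. \<bar>D (Suc k) - D k\<bar>) = (\<Sum>k<K. -(D (Suc k) - D k))"
    by (rule sum.cong) (use low in auto)
  also have "\<dots> = D 0 - D K" by (simp only: sum_negf sum_lessThan_telescope)
  also have "(\<Sum>k=K..<m-1. \<bar>D (Suc k) - D k\<bar>) = (\<Sum>k=K..<m-1. D (Suc k) - D k)"
    by (rule sum.cong) (use high in auto)
  also have "\<dots> = D (m-1) - D K" using Km by (simp add: sum_Suc_diff')
  moreover have "D K \<ge> 0" using nn \<open>K < m\<close> by simp
  ultimately show ?thesis by linarith
qed

lemma sum_ind: "(\<Sum>k<n. if k < i then 1 else (0::real)) = real (min i n)"
  by (induction n) (auto simp: min_def)

lemma count_levels: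
  fixes i j n :: nat
  assumes "i \<le> n" "j \<le> n"
  shows "\<bar>real i - real j\<bar> = (\<Sum>k<n. \<bar>(if k < i then 1 else 0) - (if k < j then 1 else (0::real))\<bar>)"
proof -
  have "(\<Sum>k<n. \<bar>(if k < i then 1 else 0) - (if k < j then 1 else (0::real))\<bar>)
      = (\<Sum>k<n. (if k < max i j then 1 else 0) - (if k < min i j then 1 else (0::real)))"
    by (rule sum.cong) auto
  also have "\<dots> = real (min (max i j) n) - real (min (min i j) n)"
    by (simp only: sum_subtractf sum_ind)
  finally show ?thesis using assms by (simp add: max_def min_def)
qed

lemma cl_le: "max (-1) (min 1 (max p q)) + 1 - (max (-1) (min 1 (min p q)) + 1) \<le> \<bar>p - q::real\<bar>"
  unfolding max_def min_def by (simp split: if_split)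

lemma ind_abs: "\<bar>(if (r::real) < p then 1 else 0) - (if r < q then 1 else (0::real))\<bar> = (if r < max p q then 1 else 0) - (if r < min p q then 1 else (0::real))"
  by (cases "p \<le> q") (auto simp: max_def min_def)

lemma J_integral:
  fixes a :: real
  shows "((\<lambda>r::real. if r < a then 1 else 0::real) has_integral (max (-1) (min 1 a) + 1)) {-1<..<1}"
proof -
  have "((\<lambda>r::real. if r < a then 1 else 0::real) has_integral (max (-1) (min 1 a) + 1)) {-1..1}"
  proof (cases "a \<le> -1")
    case True
    have h: "((\<lambda>r::real. 0::real) has_integral (max (-1) (min 1 a) + 1)) {-1..1}" using True by simp
    show ?thesis
      by (rule has_integral_spike_finite[OF _ _ h, of "{}"]) (use True in auto)
  next
    case False
    show ?thesis
    proof (cases "a \<ge> 1")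
      case True
      have h: "((\<lambda>r::real. 1::real) has_integral (max (-1) (min 1 a) + 1)) {-1..1}"
        using has_integral_const_real[of "1::real" "-1" 1] True by simp
      show ?thesis
        by (rule has_integral_spike_finite[OF _ _ h, of "{1}"]) (use True in auto)
    next
      case False
      have i1: "((\<lambda>r::real. if r < a then 1 else 0::real) has_integral (a + 1)) {-1..a}"
      proof -
        have h: "((\<lambda>r::real. 1::real) has_integral (a+1)) {-1..a}"
          using has_integral_const_real[of "1::real" "-1" a] \<open>\<not> a \<le> -1\<close> by simp
        show ?thesis
          by (rule has_integral_spike_finite[OF _ _ h, of "{a}"]) auto
      qed
      have i2: "((\<lambda>r::real. if r < a then 1 else 0::real) has_integral 0) {a..1}"
      proof -
        have h: "((\<lambda>r::real. 0::real) has_integral 0) {a..1}" by simp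
        show ?thesis
          by (rule has_integral_spike_finite[OF _ _ h, of "{}"]) auto
      qed
      have "((\<lambda>r::real. if r < a then 1 else 0::real) has_integral (a + 1 + 0)) {-1..1}"
        by (rule has_integral_combine[OF _ _ i1 i2]) (use False \<open>\<not> a \<le> -1\<close> in auto)
      then show ?thesis using False \<open>\<not> a \<le> -1\<close> by simp
    qed
  qed
  then show ?thesis using has_integral_Icc_iff_Ioo by blast
qed



locale drbg =
  fixes m :: nat and \<delta> \<theta> :: real and nm :: "real \<Rightarrow> real"
    and c :: "nat \<Rightarrow> real \<Rightarrow> real" and xs :: "nat \<Rightarrow> real \<Rightarrow> real"
  assumes m_pos: "m \<ge> 1" and delta_pos: "\<delta> > 0"
    and norm: "is_norm nm" and theta: "\<theta> \<ge> 1"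
    and cost_nonneg: "\<forall>s. \<forall>y \<in> states m \<delta>. c s y \<ge> 0"
    and cost_convex: "\<forall>s. \<exists>f. convex_on UNIV f \<and> (\<forall>y \<in> states m \<delta>. c s y = f y)"
    and start: "\<forall>r. xs 0 r = 0"
    and alg: "\<forall>s r. s \<ge> 1 \<and> -1 < r \<and> r < 1 \<longrightarrow>
               xs s r \<in> states m \<delta> \<and>
               (\<forall>y \<in> states m \<delta>.
                  work (states m \<delta>) (\<lambda>x. \<theta> * nm x) c (s - 1) (xs s r) + r * (\<theta> * nm (xs s r))
                  \<le> work (states m \<delta>) (\<lambda>x. \<theta> * nm x) c (s - 1) y + r * (\<theta> * nm y))"
begin

definition "n1 = nm 1"
definition "ell = \<theta> * n1 * \<delta>"
definition "Wk s i = work (states m \<delta>) (\<lambda>x. \<theta> * nm x) c s (real i * \<delta>)"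
definition "a s k = Wk s (Suc k) - Wk s k"
definition "C s k = c s (real k * \<delta>)"
definition "alpha s k = - a s k / ell"

lemma nm_eq: "nm x = \<bar>x\<bar> * n1"
proof -
  have "nm (x * 1) = \<bar>x\<bar> * nm 1" using norm unfolding is_norm_def by blast
  then show ?thesis by (simp add: n1_def)
qed

lemma n1_pos: "n1 > 0"
proof -
  have "nm 1 \<ge> 0" "nm 1 \<noteq> 0" using norm unfolding is_norm_def by auto
  then show ?thesis by (simp add: n1_def)
qed

lemma ell_pos: "ell > 0" using theta n1_pos delta_pos by (simp add: ell_def)

lemma mem_states: "k < m \<Longrightarrow> real k * \<delta> \<in> states m \<delta>"
  unfolding states_def by blast

lemma states_eq: "states m \<delta> = (\<lambda>k. real k * \<delta>) ` {..<m}"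
  unfolding states_def by auto

lemma Nf_grid: "\<theta> * nm (real i * \<delta> - real j * \<delta>) = ell * \<bar>real i - real j\<bar>"
proof -
  have "real i * \<delta> - real j * \<delta> = (real i - real j) * \<delta>" by (simp add: algebra_simps)
  then show ?thesis using delta_pos by (simp add: nm_eq ell_def abs_mult)
qed

lemma Nf_pt: "\<theta> * nm (real i * \<delta>) = ell * real i"
  using Nf_grid[of i 0] by simp

lemma Wk0: "Wk 0 i = ell * real i"
  using Nf_pt by (simp add: Wk_def)

lemma Wk_Suc: "Wk (Suc s) i = Wc m (\<lambda>j. Wk s j + C (Suc s) j) ell i"
proof -
  have "Wk (Suc s) i = Min ((\<lambda>y. work (states m \<delta>) (\<lambda>x. \<theta> * nm x) c s y + c (Suc s) y + \<theta> * nm (real i * \<delta> - y)) ` states m \<delta>)"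
    by (simp add: Wk_def)
  also have "\<dots> = Min ((\<lambda>y. work (states m \<delta>) (\<lambda>x. \<theta> * nm x) c s y + c (Suc s) y + \<theta> * nm (real i * \<delta> - y)) ` ((\<lambda>k. real k * \<delta>) ` {..<m}))"
    by (simp only: states_eq[symmetric])
  also have "\<dots> = Wc m (\<lambda>j. Wk s j + C (Suc s) j) ell i"
    unfolding Wc_def image_image
    by (rule arg_cong[where f=Min], rule image_cong) (auto simp: Wk_def C_def Nf_grid)
  finally show ?thesis .
qed

lemma C_cvx: "k+2 < m \<Longrightarrow> C s (Suc k) - C s k \<le> C s (Suc (Suc k)) - C s (Suc k)"
proof -
  assume k: "k+2 < m"
  obtain f where f: "convex_on UNIV f" "\<forall>y \<in> states m \<delta>. c s y = f y" using cost_convex by blast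
  have h: "f ((1 - 1/2) *\<^sub>R (real k * \<delta>) + (1/2) *\<^sub>R (real (Suc (Suc k)) * \<delta>))
      \<le> (1 - 1/2) * f (real k * \<delta>) + (1/2) * f (real (Suc (Suc k)) * \<delta>)"
    by (rule convex_onD[OF f(1)]) auto
  have e: "(1 - 1/2) *\<^sub>R (real k * \<delta>) + (1/2) *\<^sub>R (real (Suc (Suc k)) * \<delta>) = real (Suc k) * \<delta>"
    by (simp add: algebra_simps)
  have m0: "k < m" "Suc k < m" "Suc (Suc k) < m" using k by auto
  have "C s k = f (real k * \<delta>)" "C s (Suc k) = f (real (Suc k) * \<delta>)" "C s (Suc (Suc k)) = f (real (Suc (Suc k)) * \<delta>)"
    unfolding C_def using f(2)[rule_format, OF mem_states[OF m0(1)]] f(2)[rule_format, OF mem_states[OF m0(2)]]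
      f(2)[rule_format, OF mem_states[OF m0(3)]] by blast+
  then show ?thesis using h e by simp
qed

lemma C_nonneg: "k < m \<Longrightarrow> C s k \<ge> 0"
  using cost_nonneg mem_states by (simp add: C_def)

lemma a_Suc_cond:
  assumes cv: "\<forall>k. k+2 < m \<longrightarrow> a s k \<le> a s (Suc k)" and k: "Suc k < m"
  shows "a (Suc s) k = max (-ell) (min ell (a s k + (C (Suc s) (Suc k) - C (Suc s) k)))"
proof -
  define H where "H j = Wk s j + C (Suc s) j" for j
  have cvH: "\<forall>k. k+2 < m \<longrightarrow> H (Suc k) - H k \<le> H (Suc (Suc k)) - H (Suc k)"
  proof (intro allI impI)
    fix k assume "k+2 < m"
    then show "H (Suc k) - H k \<le> H (Suc (Suc k)) - H (Suc k)"
      using cv[rule_format, of k] C_cvx[of k "Suc s"] by (simp add: H_def a_def)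
  qed
  have Heq: "(\<lambda>j. Wk s j + C (Suc s) j) = H" by (simp add: H_def fun_eq_iff)
  have "a (Suc s) k = Wc m H ell (Suc k) - Wc m H ell k"
    by (simp add: a_def Wk_Suc Heq)
  also have "\<dots> = max (-ell) (min ell (H (Suc k) - H k))"
    by (rule Wc_slope[OF cvH k]) (use ell_pos in simp)
  finally show ?thesis by (simp add: H_def a_def)
qed

lemma inv: "(\<forall>k. Suc k < m \<longrightarrow> \<bar>a s k\<bar> \<le> ell) \<and> (\<forall>k. k+2 < m \<longrightarrow> a s k \<le> a s (Suc k))"
proof (induction s)
  case 0
  show ?case using ell_pos by (simp add: a_def Wk0 algebra_simps)
next
  case (Suc s)
  have eq: "a (Suc s) k = max (-ell) (min ell (a s k + (C (Suc s) (Suc k) - C (Suc s) k)))" if "Suc k < m" for k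
    using a_Suc_cond Suc that by blast
  show ?case
  proof (intro conjI allI impI)
    fix k assume "Suc k < m"
    then show "\<bar>a (Suc s) k\<bar> \<le> ell" using eq ell_pos by (simp add: abs_le_iff)
  next
    fix k assume k: "k+2 < m"
    have "a s k + (C (Suc s) (Suc k) - C (Suc s) k) \<le> a s (Suc k) + (C (Suc s) (Suc (Suc k)) - C (Suc s) (Suc k))"
      using Suc k C_cvx[OF k, of "Suc s"] by auto
    then show "a (Suc s) k \<le> a (Suc s) (Suc k)" using eq[of k] eq[of "Suc k"] k
      by (auto simp: max_def min_def)
  qed
qed

lemma a_Suc: "Suc k < m \<Longrightarrow> a (Suc s) k = max (-ell) (min ell (a s k + (C (Suc s) (Suc k) - C (Suc s) k)))"
  using a_Suc_cond inv by blast

lemma Wk_lip: "i < m \<Longrightarrow> j < m \<Longrightarrow> \<bar>Wk s j - Wk s i\<bar> \<le> \<bar>real j - real i\<bar> * ell"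
  by (rule lip_bound2) (use inv[of s] in \<open>auto simp: a_def\<close>)

lemma Wk_mono: "i < m \<Longrightarrow> Wk s i \<le> Wk (Suc s) i"
proof -
  assume i: "i < m"
  obtain j where j: "j < m" "Wk (Suc s) i = Wk s j + C (Suc s) j + ell * \<bar>real i - real j\<bar>"
    using Wc_ex[of m "\<lambda>j. Wk s j + C (Suc s) j" ell i] i by (auto simp: Wk_Suc)
  have "\<bar>Wk s j - Wk s i\<bar> \<le> \<bar>real j - real i\<bar> * ell" by (rule Wk_lip[OF i j(1)])
  moreover have "C (Suc s) j \<ge> 0" using C_nonneg j by simp
  ultimately show ?thesis using j by (simp add: abs_minus_commute mult.commute abs_le_iff)
qed

lemma tv_step:
  "(\<Sum>k<m-1. \<bar>a (Suc s) k - a s k\<bar>) \<le> (Wk (Suc s) 0 - Wk s 0) + (Wk (Suc s) (m-1) - Wk s (m-1))"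
proof -
  define D where "D i = Wk (Suc s) i - Wk s i" for i
  define g where "g k = C (Suc s) (Suc k) - C (Suc s) k" for k
  have dD: "D (Suc k) - D k = a (Suc s) k - a s k" for k by (simp add: D_def a_def)
  have b: "\<bar>a s k\<bar> \<le> ell" if "Suc k < m" for k using inv that by blast
  have P: "\<forall>k j. k \<le> j \<longrightarrow> Suc j < m \<longrightarrow> D (Suc k) - D k > 0 \<longrightarrow> D (Suc j) - D j \<ge> 0"
  proof (intro allI impI)
    fix k j assume kj: "k \<le> j" "Suc j < m" and pos: "D (Suc k) - D k > 0"
    have k: "Suc k < m" using kj by simp
    have "max (-ell) (min ell (a s k + g k)) - a s k > 0"
      using pos a_Suc[OF k, of s] by (simp add: dD g_def)
    then have gk: "g k > 0" using b[OF k] by (auto simp: max_def min_def abs_le_iff split: if_splits)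
    have "g k \<le> g j" unfolding g_def
      by (rule mono_slopes[of m]) (use C_cvx kj in auto)
    then have "g j > 0" using gk by simp
    then have "max (-ell) (min ell (a s j + g j)) - a s j \<ge> 0"
      using b[OF kj(2)] by (auto simp: max_def min_def abs_le_iff)
    then show "D (Suc j) - D j \<ge> 0" using a_Suc[OF kj(2), of s] by (simp add: dD g_def)
  qed
  have nn: "\<forall>i<m. D i \<ge> 0" using Wk_mono by (simp add: D_def)
  have "(\<Sum>k<m-1. \<bar>D (Suc k) - D k\<bar>) \<le> D 0 + D (m-1)"
    by (rule tv_bound[OF m_pos nn P])
  moreover have "(\<Sum>k<m-1. \<bar>a (Suc s) k - a s k\<bar>) = (\<Sum>k<m-1. \<bar>D (Suc k) - D k\<bar>)" by (simp only: dD)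
  ultimately show ?thesis by (simp add: D_def)
qed

end



context drbg begin

lemma xs_grid: "1 \<le> s \<Longrightarrow> -1 < r \<Longrightarrow> r < 1 \<Longrightarrow> \<exists>i<m. xs s r = real i * \<delta>"
  using alg unfolding states_def by blast

lemma xs_min:
  assumes "1 \<le> s" "-1 < r" "r < 1" "xs s r = real i * \<delta>" "j < m"
  shows "Wk (s-1) i + r * (ell * real i) \<le> Wk (s-1) j + r * (ell * real j)"
proof -
  have "work (states m \<delta>) (\<lambda>x. \<theta> * nm x) c (s - 1) (xs s r) + r * (\<theta> * nm (xs s r))
                  \<le> work (states m \<delta>) (\<lambda>x. \<theta> * nm x) c (s - 1) (real j * \<delta>) + r * (\<theta> * nm (real j * \<delta>))"
    using alg assms mem_states[OF assms(5)] by blast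
  then show ?thesis using assms(4) by (simp add: Wk_def Nf_pt)
qed

lemma xs1: "-1 < r \<Longrightarrow> r < 1 \<Longrightarrow> xs (Suc 0) r = 0"
proof -
  assume r: "-1 < r" "r < 1"
  obtain i where i: "i < m" "xs (Suc 0) r = real i * \<delta>" using xs_grid[of "Suc 0" r] r by auto
  have "Wk 0 i + r * (ell * real i) \<le> Wk 0 0 + r * (ell * real 0)"
    using xs_min[of "Suc 0" r i 0] r i m_pos by simp
  then have "(1 + r) * (ell * real i) \<le> 0" by (simp add: Wk0 algebra_simps)
  moreover have "(1 + r) * (ell * real i) \<ge> 0" using r ell_pos by simp
  ultimately have "(1 + r) * (ell * real i) = 0" by linarith
  then have "i = 0" using r ell_pos by simp
  then show ?thesis using i by simp
qed

lemma xs_ind: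
  assumes r: "-1 < r" "r < 1" and k: "Suc k < m" and ne: "r \<noteq> alpha s k"
  shows "(real k * \<delta> < xs (Suc s) r) \<longleftrightarrow> r < alpha s k"
proof -
  obtain i where i: "i < m" "xs (Suc s) r = real i * \<delta>" using xs_grid[of "Suc s" r] r by auto
  define G where "G j = Wk s j + r * (ell * real j)" for j
  have cvG: "\<forall>k. k+2 < m \<longrightarrow> G (Suc k) - G k \<le> G (Suc (Suc k)) - G (Suc k)"
  proof (intro allI impI)
    fix k assume "k+2 < m"
    then have "a s k \<le> a s (Suc k)" using inv by blast
    then show "G (Suc k) - G k \<le> G (Suc (Suc k)) - G (Suc k)" by (simp add: G_def a_def algebra_simps)
  qed
  have mn: "\<forall>j<m. G i \<le> G j" using xs_min[of "Suc s" r i] r i by (simp add: G_def)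
  have sl: "G (Suc k) - G k = a s k + r * ell" by (simp add: G_def a_def algebra_simps)
  have ae: "alpha s k * ell = - a s k" using ell_pos by (simp add: alpha_def)
  have "r < alpha s k \<longleftrightarrow> r * ell < alpha s k * ell" using ell_pos by simp
  then have iff: "r < alpha s k \<longleftrightarrow> a s k + r * ell < 0" using ae by linarith
  have ne2: "a s k + r * ell \<noteq> 0"
  proof
    assume "a s k + r * ell = 0"
    then have "r = alpha s k" using ell_pos by (simp add: alpha_def field_simps)
    then show False using ne by simp
  qed
  have kk: "(real k * \<delta> < real i * \<delta>) \<longleftrightarrow> k < i" using delta_pos by simp
  show ?thesis
  proof (cases "a s k + r * ell < 0")
    case True
    then have "k < i" using threshold_lt[OF cvG i(1) mn k] sl by simp
    then show ?thesis using True iff kk i by simp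
  next
    case False
    then have "a s k + r * ell > 0" using ne2 by simp
    then have "i \<le> k" using threshold_gt[OF cvG i(1) mn k] sl by simp
    then show ?thesis using False iff kk i by simp
  qed
qed

definition "F s r = n1 * \<delta> * (\<Sum>k<m-1. \<bar>(if r < alpha (Suc s) k then 1 else 0) - (if r < alpha s k then 1 else (0::real))\<bar>)"

lemma term_eq:
  assumes r: "-1 < r" "r < 1" and ne: "\<forall>k. Suc k < m \<longrightarrow> r \<noteq> alpha s k \<and> r \<noteq> alpha (Suc s) k"
  shows "nm (xs (Suc (Suc s)) r - xs (Suc s) r) = F s r"
proof -
  obtain i where i: "i < m" "xs (Suc (Suc s)) r = real i * \<delta>" using xs_grid[of "Suc (Suc s)" r] r by auto
  obtain j where j: "j < m" "xs (Suc s) r = real j * \<delta>" using xs_grid[of "Suc s" r] r by auto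
  have "nm (xs (Suc (Suc s)) r - xs (Suc s) r) = \<bar>real i - real j\<bar> * \<delta> * n1"
  proof -
    have "real i * \<delta> - real j * \<delta> = (real i - real j) * \<delta>" by (simp add: algebra_simps)
    then show ?thesis using i j delta_pos by (simp add: nm_eq abs_mult)
  qed
  also have "\<bar>real i - real j\<bar> = (\<Sum>k<m-1. \<bar>(if k < i then 1 else 0) - (if k < j then 1 else (0::real))\<bar>)"
    by (rule count_levels) (use i j in auto)
  also have "\<dots> = (\<Sum>k<m-1. \<bar>(if r < alpha (Suc s) k then 1 else 0) - (if r < alpha s k then 1 else (0::real))\<bar>)"
  proof (rule sum.cong)
    fix k assume "k \<in> {..<m-1}"
    then have k: "Suc k < m" by auto
    have kk: "\<And>n. (real k * \<delta> < real n * \<delta>) \<longleftrightarrow> k < n" using delta_pos by simp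
    have "k < i \<longleftrightarrow> r < alpha (Suc s) k" using xs_ind[OF r k, of "Suc s"] ne k i kk by auto
    moreover have "k < j \<longleftrightarrow> r < alpha s k" using xs_ind[OF r k, of s] ne k j kk by auto
    ultimately show "\<bar>(if k < i then 1 else 0) - (if k < j then 1 else (0::real))\<bar> =
      \<bar>(if r < alpha (Suc s) k then 1 else 0) - (if r < alpha s k then 1 else (0::real))\<bar>" by simp
  qed simp
  finally show ?thesis by (simp add: F_def mult.commute mult.left_commute)
qed

definition "Sbad t = (\<lambda>p. alpha (fst p) (snd p)) ` ({..<t} \<times> {..<m-1})"

lemma Sbad_finite: "finite (Sbad t)" by (simp add: Sbad_def)

lemma SC_eq: "-1 < r \<Longrightarrow> r < 1 \<Longrightarrow> r \<notin> Sbad t \<Longrightarrow> switching_cost nm xs t r = (\<Sum>s<t-1. F s r)"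
proof (induction t)
  case 0
  then show ?case by (simp add: switching_cost_def)
next
  case (Suc t)
  note pr = Suc.prems
  have sub: "Sbad t \<subseteq> Sbad (Suc t)" unfolding Sbad_def by auto
  have IH: "switching_cost nm xs t r = (\<Sum>s<t-1. F s r)" using Suc sub by auto
  have SC: "switching_cost nm xs (Suc t) r = switching_cost nm xs t r + nm (xs (Suc t) r - xs t r)"
    by (simp add: switching_cost_def)
  show ?case
  proof (cases t)
    case 0
    have "nm 0 = 0" by (simp add: nm_eq)
    then show ?thesis using SC IH xs1[OF pr(1,2)] start 0 by simp
  next
    case (Suc s)
    have ne: "\<forall>k. Suc k < m \<longrightarrow> r \<noteq> alpha s k \<and> r \<noteq> alpha (Suc s) k"
    proof (intro allI impI)
      fix k assume "Suc k < m"
      then have "k \<in> {..<m-1}" by auto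
      moreover have "s < Suc t" "Suc s < Suc t" using Suc by auto
      ultimately have "alpha s k \<in> Sbad (Suc t)" "alpha (Suc s) k \<in> Sbad (Suc t)"
        unfolding Sbad_def by (force intro: image_eqI[where x="(s,k)"], force intro: image_eqI[where x="(Suc s,k)"])
      then show "r \<noteq> alpha s k \<and> r \<noteq> alpha (Suc s) k" using pr(3) by auto
    qed
    have "nm (xs (Suc t) r - xs t r) = F s r" using term_eq[OF pr(1,2) ne] Suc by simp
    then show ?thesis using SC IH Suc by simp
  qed
qed

definition "cl x = max (-1) (min 1 x)"

definition "Fint s = n1 * \<delta> * (\<Sum>k<m-1. (cl (max (alpha (Suc s) k) (alpha s k)) + 1) - (cl (min (alpha (Suc s) k) (alpha s k)) + 1))"

lemma F_int: "(F s has_integral Fint s) {-1<..<1}"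
proof -
  have eq: "F s r = n1 * \<delta> * (\<Sum>k<m-1. (if r < max (alpha (Suc s) k) (alpha s k) then 1 else 0) - (if r < min (alpha (Suc s) k) (alpha s k) then 1 else (0::real)))" for r
    unfolding F_def by (simp only: ind_abs)
  have "((\<lambda>r. n1 * \<delta> * (\<Sum>k<m-1. (if r < max (alpha (Suc s) k) (alpha s k) then 1 else 0) - (if r < min (alpha (Suc s) k) (alpha s k) then 1 else (0::real)))) has_integral Fint s) {-1<..<1}"
    unfolding Fint_def cl_def
    by (intro has_integral_mult_right has_integral_sum has_integral_diff J_integral) simp
  moreover have "F s = (\<lambda>r. n1 * \<delta> * (\<Sum>k<m-1. (if r < max (alpha (Suc s) k) (alpha s k) then 1 else 0) - (if r < min (alpha (Suc s) k) (alpha s k) then 1 else (0::real))))"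
    by (rule ext, rule eq)
  ultimately show ?thesis by (simp only:)
qed

lemma Fint_le: "Fint s \<le> (1/\<theta>) * (\<Sum>k<m-1. \<bar>a (Suc s) k - a s k\<bar>)"
proof -
  have "Fint s \<le> n1 * \<delta> * (\<Sum>k<m-1. \<bar>alpha (Suc s) k - alpha s k\<bar>)"
    unfolding Fint_def
    by (rule mult_left_mono, rule sum_mono, unfold cl_def, rule cl_le) (use n1_pos delta_pos in simp)
  also have "(\<Sum>k<m-1. \<bar>alpha (Suc s) k - alpha s k\<bar>) = (\<Sum>k<m-1. \<bar>a (Suc s) k - a s k\<bar>) / ell"
    unfolding sum_divide_distrib
  proof (rule sum.cong)
    fix k
    have e: "alpha (Suc s) k - alpha s k = (a s k - a (Suc s) k) / ell"
      unfolding alpha_def using ell_pos by (simp add: field_simps)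
    have "\<bar>alpha (Suc s) k - alpha s k\<bar> = \<bar>a s k - a (Suc s) k\<bar> / ell"
      unfolding e using ell_pos by simp
    also have "\<bar>a s k - a (Suc s) k\<bar> = \<bar>a (Suc s) k - a s k\<bar>" by (rule abs_minus_commute)
    finally show "\<bar>alpha (Suc s) k - alpha s k\<bar> = \<bar>a (Suc s) k - a s k\<bar> / ell" .
  qed simp
  finally show ?thesis using n1_pos delta_pos theta by (simp add: ell_def field_simps)
qed

lemma main:
  shows "switching_cost nm xs t integrable_on {-1<..<1} \<and>
         integral {-1<..<1} (switching_cost nm xs t) / 2
           \<le> (work (states m \<delta>) (\<lambda>x. \<theta> * nm x) c t 0
               + work (states m \<delta>) (\<lambda>x. \<theta> * nm x) c t (real (m - 1) * \<delta>)) / (2 * \<theta>)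
             - nm (real (m - 1) * \<delta> - 0) / 2"
proof -
  have hint: "((\<lambda>r. \<Sum>s<t-1. F s r) has_integral (\<Sum>s<t-1. Fint s)) {-1<..<1}"
    by (rule has_integral_sum) (auto intro: F_int)
  have HI: "(switching_cost nm xs t has_integral (\<Sum>s<t-1. Fint s)) {-1<..<1}"
    by (rule has_integral_spike_finite[OF Sbad_finite[of t] _ hint]) (auto simp: SC_eq)
  have "(\<Sum>s<t-1. Fint s) \<le> (\<Sum>s<t-1. (1/\<theta>) * ((Wk (Suc s) 0 - Wk s 0) + (Wk (Suc s) (m-1) - Wk s (m-1))))"
  proof (rule sum_mono)
    fix s
    have "Fint s \<le> (1/\<theta>) * (\<Sum>k<m-1. \<bar>a (Suc s) k - a s k\<bar>)" by (rule Fint_le)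
    also have "\<dots> \<le> (1/\<theta>) * ((Wk (Suc s) 0 - Wk s 0) + (Wk (Suc s) (m-1) - Wk s (m-1)))"
      by (rule mult_left_mono[OF tv_step]) (use theta in simp)
    finally show "Fint s \<le> \<dots>" .
  qed
  also have "\<dots> = (1/\<theta>) * ((Wk (t-1) 0 - Wk 0 0) + (Wk (t-1) (m-1) - Wk 0 (m-1)))"
    by (simp only: sum_distrib_left[symmetric] sum.distrib sum_lessThan_telescope[of "\<lambda>s. Wk s 0"]
        sum_lessThan_telescope[of "\<lambda>s. Wk s (m-1)"])
  finally have b1: "(\<Sum>s<t-1. Fint s) \<le> (1/\<theta>) * ((Wk (t-1) 0 - Wk 0 0) + (Wk (t-1) (m-1) - Wk 0 (m-1)))" .
  have mono: "Wk (t-1) i \<le> Wk t i" if "i < m" for i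
  proof (cases t)
    case 0 then show ?thesis by simp
  next
    case (Suc t') then show ?thesis using Wk_mono[OF that, of t'] by simp
  qed
  have m1: "m - 1 < m" "0 < m" using m_pos by auto
  have b2: "(\<Sum>s<t-1. Fint s) \<le> (1/\<theta>) * ((Wk t 0 + Wk t (m-1)) - ell * real (m-1))"
  proof -
    have "(Wk (t-1) 0 - Wk 0 0) + (Wk (t-1) (m-1) - Wk 0 (m-1)) \<le> (Wk t 0 + Wk t (m-1)) - ell * real (m-1)"
      using mono[OF m1(1)] mono[OF m1(2)] by (simp add: Wk0)
    then have "(1/\<theta>) * ((Wk (t-1) 0 - Wk 0 0) + (Wk (t-1) (m-1) - Wk 0 (m-1))) \<le> (1/\<theta>) * ((Wk t 0 + Wk t (m-1)) - ell * real (m-1))"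
      by (rule mult_left_mono) (use theta in simp)
    then show ?thesis using b1 by linarith
  qed
  have w0: "work (states m \<delta>) (\<lambda>x. \<theta> * nm x) c t 0 = Wk t 0" by (simp add: Wk_def)
  have w1: "work (states m \<delta>) (\<lambda>x. \<theta> * nm x) c t (real (m - 1) * \<delta>) = Wk t (m-1)" by (simp add: Wk_def)
  have nmv: "nm (real (m - 1) * \<delta> - 0) = real (m-1) * \<delta> * n1" using delta_pos by (simp add: nm_eq)
  have "integral {-1<..<1} (switching_cost nm xs t) / 2 = (\<Sum>s<t-1. Fint s) / 2"
    using HI by (simp add: integral_unique)
  also have "\<dots> \<le> (1/\<theta>) * ((Wk t 0 + Wk t (m-1)) - ell * real (m-1)) / 2"
    by (rule divide_right_mono[OF b2]) simp
  also have "\<dots> = (Wk t 0 + Wk t (m-1)) / (2 * \<theta>) - real (m-1) * \<delta> * n1 / 2"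
    using theta by (simp add: ell_def field_simps)
  finally have fin: "integral {-1<..<1} (switching_cost nm xs t) / 2 \<le> (Wk t 0 + Wk t (m-1)) / (2 * \<theta>) - real (m-1) * \<delta> * n1 / 2" .
  show ?thesis unfolding w0 w1 nmv using has_integral_integrable[OF HI] fin by blast
qed

end


theorem lemma10:
  fixes m :: nat and \<delta> \<theta> :: real and nm :: "real \<Rightarrow> real"
    and c :: "nat \<Rightarrow> real \<Rightarrow> real" and xs :: "nat \<Rightarrow> real \<Rightarrow> real" and t :: nat
  assumes m_pos: "m \<ge> 1" and delta_pos: "\<delta> > 0"
    and norm: "is_norm nm" and theta: "\<theta> \<ge> 1"
    and cost_nonneg: "\<forall>s. \<forall>y \<in> states m \<delta>. c s y \<ge> 0"
    and cost_convex: "\<forall>s. \<exists>f. convex_on UNIV f \<and> (\<forall>y \<in> states m \<delta>. c s y = f y)"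
    and start: "\<forall>r. xs 0 r = 0"
    and alg: "\<forall>s r. s \<ge> 1 \<and> -1 < r \<and> r < 1 \<longrightarrow>
               xs s r \<in> states m \<delta> \<and>
               (\<forall>y \<in> states m \<delta>.
                  work (states m \<delta>) (\<lambda>x. \<theta> * nm x) c (s - 1) (xs s r) + r * (\<theta> * nm (xs s r))
                  \<le> work (states m \<delta>) (\<lambda>x. \<theta> * nm x) c (s - 1) y + r * (\<theta> * nm y))"
  shows "switching_cost nm xs t integrable_on {-1<..<1} \<and>
         integral {-1<..<1} (switching_cost nm xs t) / 2
           \<le> (work (states m \<delta>) (\<lambda>x. \<theta> * nm x) c t 0
               + work (states m \<delta>) (\<lambda>x. \<theta> * nm x) c t (real (m - 1) * \<delta>)) / (2 * \<theta>)
             - nm (real (m - 1) * \<delta> - 0) / 2"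
proof -
  have "drbg m \<delta> \<theta> nm c xs" using assms unfolding drbg_def by blast
  then show ?thesis by (rule drbg.main)
qed

end
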